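(* Under the model and the scheme described in the context, for every $t\ge 1$, $\Pr(Q_t=AB)=|1-\alpha-\beta|^t$; consequently the scheme is decodable and has average normalized download cost $\ell_t/L=1+|1-\alpha-\beta|^t$ for $t\ge1$ (and $\ell_t/L=2$ for $t\le 0$), where $\ell(A)=\ell(B)=L$, $\ell(AB)=2L$ and $\ell_t=\mathbb{E}[\ell(Q_t)]$.
   Context: Model. Fix $\alpha,\beta\in[0,1]$ and a positive integer $L$. There are two sources, $A$ and $B$. At each time $t\in\mathbb{Z}$ each source $x\in\{A,B\}$ produces a message $W_{x,t}$ uniformly distributed on $\{0,1\}^L$; all messages are mutually independent. The user's requests $\{X_t\}_{t\in\mathbb{Z}}$ form a time-homogeneous Markov chain on $\{A,B\}$ with $\Pr(X_{t+1}=B\mid X_t=A)=\alpha$ and $\Pr(X_{t+1}=A\mid X_t=B)=\beta$, and $0<\Pr(X_t=A)<1$ for every $t$. The user has mutually independent local randomness $\{S_t\}_{t\in\mathbb{Z}}$, and $\{X_t\}$, $\{W_{x,t}\}$, $\{S_t\}$ are mutually independent. Decodability means the user's desired message $W_{X_t,t}$ is a function of the answer at time $t$. Scheme. Query alphabet $\{A,B,AB\}$. The answer to query $A$ is $W_{A,t}$, to $B$ is $W_{B,t}$, to $AB$ is $(W_{A,t},W_{B,t})$. For $t\le 0$, $Q_t=AB$. For $t\ge1$, $Q_t$ is generated from $(X_0,X_t,Q_{t-1})$ and fresh randomness $S_t$ (so that, given $(X_0,X_t,Q_{t-1})$, $Q_t$ is conditionally independent of all other requests and queries) as follows. If $Q_{t-1}\in\{A,B\}$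 then $Q_t=X_t$. If $Q_{t-1}=AB$, then the conditional law of $Q_t$ given $(X_0,X_t)$ is: (i) if $\alpha+\beta<1$: for $(X_0,X_t)=(A,A)$, $Q_t=A$ w.p. $\beta/(1-\alpha)$ and $Q_t=AB$ w.p. $(1-\alpha-\beta)/(1-\alpha)$; for $(A,B)$, $Q_t=B$; for $(B,A)$, $Q_t=A$; for $(B,B)$, $Q_t=B$ w.p. $\alpha/(1-\beta)$ and $Q_t=AB$ w.p. $(1-\alpha-\beta)/(1-\beta)$; (ii) if $\alpha+\beta=1$: $Q_t=X_t$; (iii) if $\alpha+\beta>1$ and $t$ even: for $(A,A)$, $Q_t=A$ w.p. $(1-\alpha)/\beta$ and $AB$ w.p. $(\alpha+\beta-1)/\beta$; for $(A,B)$, $Q_t=B$; for $(B,A)$, $Q_t=A$; for $(B,B)$, $Q_t=B$ w.p. $(1-\beta)/\alpha$ and $AB$ w.p. $(\alpha+\beta-1)/\alpha$; (iv) if $\alpha+\beta>1$ and $t$ odd: for $(A,A)$, $Q_t=A$; for $(A,B)$, $Q_t=B$ w.p. $(1-\beta)/\alpha$ and $AB$ w.p. $(\alpha+\beta-1)/\alpha$; for $(B,A)$, $Q_t=A$ w.p. $(1-\alpha)/\beta$ and $AB$ w.p. $(\alpha+\beta-1)/\beta$; for $(B,B)$, $Q_t=B$. *)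

theory Defs
  imports "HOL-Probability.Probability"
begin

datatype src = SrcA | SrcB
datatype qry = QA | QB | QAB
datatype answer = Single "bool list" | Both "bool list" "bool list"

definition trans_prob :: "real \<Rightarrow> real \<Rightarrow> src \<Rightarrow> src \<Rightarrow> real" where
  "trans_prob \<alpha> \<beta> x y =
     (case (x, y) of (SrcA, SrcA) \<Rightarrow> 1 - \<alpha> | (SrcA, SrcB) \<Rightarrow> \<alpha>
                   | (SrcB, SrcA) \<Rightarrow> \<beta> | (SrcB, SrcB) \<Rightarrow> 1 - \<beta>)"

definition src_query :: "src \<Rightarrow> qry" where
  "src_query x = (case x of SrcA \<Rightarrow> QA | SrcB \<Rightarrow> QB)"

definition ind :: "bool \<Rightarrow> real" where
  "ind b = (if b then 1 else 0)"

text \<open>Conditional law of Q_t (t >= 1) given (X_0, X_t, Q_{t-1}) = (x0, xt, q):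
  probability that Q_t = q'.\<close>
definition scheme_kernel :: "real \<Rightarrow> real \<Rightarrow> int \<Rightarrow> src \<Rightarrow> src \<Rightarrow> qry \<Rightarrow> qry \<Rightarrow> real" where
  "scheme_kernel \<alpha> \<beta> t x0 xt q q' =
    (if q \<noteq> QAB then ind (q' = src_query xt)
     else if \<alpha> + \<beta> < 1 then
       (case (x0, xt) of
          (SrcA, SrcA) \<Rightarrow> (if q' = QA then \<beta> / (1 - \<alpha>)
                           else if q' = QAB then (1 - \<alpha> - \<beta>) / (1 - \<alpha>) else 0)
        | (SrcA, SrcB) \<Rightarrow> ind (q' = QB)
        | (SrcB, SrcA) \<Rightarrow> ind (q' = QA)
        | (SrcB, SrcB) \<Rightarrow> (if q' = QB then \<alpha> / (1 - \<beta>)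
                           else if q' = QAB then (1 - \<alpha> - \<beta>) / (1 - \<beta>) else 0))
     else if \<alpha> + \<beta> = 1 then ind (q' = src_query xt)
     else if even t then
       (case (x0, xt) of
          (SrcA, SrcA) \<Rightarrow> (if q' = QA then (1 - \<alpha>) / \<beta>
                           else if q' = QAB then (\<alpha> + \<beta> - 1) / \<beta> else 0)
        | (SrcA, SrcB) \<Rightarrow> ind (q' = QB)
        | (SrcB, SrcA) \<Rightarrow> ind (q' = QA)
        | (SrcB, SrcB) \<Rightarrow> (if q' = QB then (1 - \<beta>) / \<alpha>
                           else if q' = QAB then (\<alpha> + \<beta> - 1) / \<alpha> else 0))
     else
       (case (x0, xt) of
          (SrcA, SrcA) \<Rightarrow> ind (q' = QA)
        | (SrcA, SrcB) \<Rightarrow> (if q' = QB then (1 - \<beta>) / \<alpha>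
                           else if q' = QAB then (\<alpha> + \<beta> - 1) / \<alpha> else 0)
        | (SrcB, SrcA) \<Rightarrow> (if q' = QA then (1 - \<alpha>) / \<beta>
                           else if q' = QAB then (\<alpha> + \<beta> - 1) / \<beta> else 0)
        | (SrcB, SrcB) \<Rightarrow> ind (q' = QB)))"

definition answer_of :: "qry \<Rightarrow> bool list \<Rightarrow> bool list \<Rightarrow> answer" where
  "answer_of q wa wb = (case q of QA \<Rightarrow> Single wa | QB \<Rightarrow> Single wb | QAB \<Rightarrow> Both wa wb)"

definition cost :: "nat \<Rightarrow> qry \<Rightarrow> real" where
  "cost L q = (case q of QA \<Rightarrow> real L | QB \<Rightarrow> real L | QAB \<Rightarrow> 2 * real L)"

text \<open>Mutual independence of: the whole request process {X_t}, each S_t, and each W_{x,t}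
  (i.e. {X}, {W}, {S} mutually independent, messages mutually independent,
  local randomness mutually independent).\<close>
definition model_indep ::
  "'w measure \<Rightarrow> (int \<Rightarrow> 'w \<Rightarrow> src) \<Rightarrow> 's measure \<Rightarrow> (int \<Rightarrow> 'w \<Rightarrow> 's)
     \<Rightarrow> (src \<Rightarrow> int \<Rightarrow> 'w \<Rightarrow> bool list) \<Rightarrow> bool" where
  "model_indep M X N S W =
     prob_space.indep_sets M
       (\<lambda>i. case i of
           Inl None \<Rightarrow> sigma_sets (space M) {X t -` {x} \<inter> space M | t x. True}
         | Inl (Some t) \<Rightarrow> {S t -` E \<inter> space M | E. E \<in> sets N}
         | Inr (x, t) \<Rightarrow> {W x t -` E \<inter> space M | E. True})
       (UNIV :: (int option + src \<times> int) set)"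

end

theory Submission imports Defs begin

instance src :: countable by countable_datatype
instance qry :: countable by countable_datatype

definition flip :: "src \<Rightarrow> src" where "flip x = (case x of SrcA \<Rightarrow> SrcB | SrcB \<Rightarrow> SrcA)"
definition gp :: "real \<Rightarrow> real \<Rightarrow> src \<Rightarrow> int \<Rightarrow> src" where
  "gp a b x0 s = (if a + b > 1 \<and> odd s then flip x0 else x0)"

lemma K1: "q \<noteq> QAB \<Longrightarrow> scheme_kernel a b s x0 xt q QAB = 0"
  by (cases xt) (auto simp: scheme_kernel_def ind_def src_query_def)

lemma K3: "scheme_kernel a b s x0 xt q q' \<noteq> 0 \<Longrightarrow> q' = src_query xt \<or> q' = QAB"
  by (cases xt; cases x0; cases q'; auto simp: scheme_kernel_def ind_def src_query_def split: if_splits)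

lemma K2: "scheme_kernel a b s x0 xt QAB QAB \<noteq> 0 \<Longrightarrow> xt = gp a b x0 s"
  by (cases xt; cases x0; auto simp: scheme_kernel_def ind_def src_query_def gp_def flip_def split: if_splits)

lemma K4: assumes "0 \<le> a" "a \<le> 1" "0 \<le> b" "b \<le> 1"
  shows "trans_prob a b (gp a b x0 (s-1)) (gp a b x0 s) * scheme_kernel a b s x0 (gp a b x0 s) QAB QAB = \<bar>1 - a - b\<bar>"
proof -
  consider "a + b < 1" | "a + b = 1" | "a + b > 1" by linarith
  then show ?thesis
  proof cases
    case 1
    then have "1 - a > 0" "1 - b > 0" using assms by auto
    then show ?thesis using 1 by (cases x0) (auto simp: scheme_kernel_def trans_prob_def gp_def)
  next
    case 2 then show ?thesis by (cases x0) (auto simp: scheme_kernel_def trans_prob_def gp_def ind_def src_query_def)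
  next
    case 3
    then have "a > 0" "b > 0" using assms by auto
    then show ?thesis using 3 by (cases x0; cases "even s") (auto simp: scheme_kernel_def trans_prob_def gp_def flip_def)
  qed
qed
theorem mainTheorem2:
  fixes M :: "'w measure" and N :: "'s measure"
    and \<alpha> \<beta> :: real and L :: nat
    and X :: "int \<Rightarrow> 'w \<Rightarrow> src"
    and W :: "src \<Rightarrow> int \<Rightarrow> 'w \<Rightarrow> bool list"
    and S :: "int \<Rightarrow> 'w \<Rightarrow> 's"
    and F :: "int \<Rightarrow> src \<Rightarrow> src \<Rightarrow> qry \<Rightarrow> 's \<Rightarrow> qry"
    and Q :: "int \<Rightarrow> 'w \<Rightarrow> qry"
  assumes P: "prob_space M"
    and ab: "0 \<le> \<alpha>" "\<alpha> \<le> 1" "0 \<le> \<beta>" "\<beta> \<le> 1"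
    and L: "L > 0"
    and X_meas: "\<And>t. X t \<in> M \<rightarrow>\<^sub>M count_space UNIV"
    and markov: "\<And>t (n::nat) (h::int \<Rightarrow> src) y.
        measure M {\<omega> \<in> space M. X (t + 1) \<omega> = y \<and> (\<forall>i\<in>{t - int n..t}. X i \<omega> = h i)}
        = trans_prob \<alpha> \<beta> (h t) y * measure M {\<omega> \<in> space M. \<forall>i\<in>{t - int n..t}. X i \<omega> = h i}"
    and nondeg: "\<And>t. 0 < measure M {\<omega> \<in> space M. X t \<omega> = SrcA}"
                "\<And>t. measure M {\<omega> \<in> space M. X t \<omega> = SrcA} < 1"
    and W_meas: "\<And>x t. W x t \<in> M \<rightarrow>\<^sub>M count_space UNIV"
    and W_unif: "\<And>x t. distr M (count_space UNIV) (W x t)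
                       = measure_pmf (pmf_of_set {xs :: bool list. length xs = L})"
    and S_meas: "\<And>t. S t \<in> M \<rightarrow>\<^sub>M N"
    and indep: "model_indep M X N S W"
    and F_meas: "\<And>t x0 xt q. F t x0 xt q \<in> N \<rightarrow>\<^sub>M count_space UNIV"
    and F_law: "\<And>t x0 xt q q'. t \<ge> 1 \<Longrightarrow>
        measure M {\<omega> \<in> space M. F t x0 xt q (S t \<omega>) = q'} = scheme_kernel \<alpha> \<beta> t x0 xt q q'"
    and Q_init: "\<And>t \<omega>. t \<le> 0 \<Longrightarrow> Q t \<omega> = QAB"
    and Q_step: "\<And>t \<omega>. t \<ge> 1 \<Longrightarrow> Q t \<omega> = F t (X 0 \<omega>) (X t \<omega>) (Q (t - 1) \<omega>) (S t \<omega>)"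
  shows "(\<forall>t \<ge> 1. measure M {\<omega> \<in> space M. Q t \<omega> = QAB} = \<bar>1 - \<alpha> - \<beta>\<bar> ^ nat t)
       \<and> (\<exists>dec :: src \<Rightarrow> qry \<Rightarrow> answer \<Rightarrow> bool list. \<forall>t.
            AE \<omega> in M. dec (X t \<omega>) (Q t \<omega>) (answer_of (Q t \<omega>) (W SrcA t \<omega>) (W SrcB t \<omega>))
                        = W (X t \<omega>) t \<omega>)
       \<and> (\<forall>t \<ge> 1. (\<integral>\<omega>. cost L (Q t \<omega>) \<partial>M) / real L = 1 + \<bar>1 - \<alpha> - \<beta>\<bar> ^ nat t)
       \<and> (\<forall>t \<le> 0. (\<integral>\<omega>. cost L (Q t \<omega>) \<partial>M) / real L = 2)"
proof -
  interpret prob_space M by (rule P)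
  define r where "r = \<bar>1 - \<alpha> - \<beta>\<bar>"
  note Xm[measurable] = X_meas
  note Sm[measurable] = S_meas
  note Fm0[measurable] = F_meas
  have Fm[measurable]: "(\<lambda>\<omega>. F t x0 xt q (S t \<omega>)) \<in> M \<rightarrow>\<^sub>M count_space UNIV" for t x0 xt q
    by measurable
  have setF: "{\<omega>\<in>space M. F t x0 xt q (S t \<omega>) = q'} \<in> sets M" for t x0 xt q q'
    by measurable
  have Qnat: "Q (int m) \<in> M \<rightarrow>\<^sub>M count_space UNIV" for m
  proof (induction m)
    case 0 then show ?case using Q_init by (simp add: measurable_const)
  next
    case (Suc m)
    note [measurable] = Suc.IH
    have "(\<lambda>\<omega>. F (int m + 1) (X 0 \<omega>) (X (int m + 1) \<omega>) (Q (int m) \<omega>) (S (int m + 1) \<omega>)) \<in> M \<rightarrow>\<^sub>M count_space UNIV"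
      by measurable
    moreover have "Q (int (Suc m)) = (\<lambda>\<omega>. F (int m + 1) (X 0 \<omega>) (X (int m + 1) \<omega>) (Q (int m) \<omega>) (S (int m + 1) \<omega>))"
      using Q_step[of "int m + 1"] by (auto simp: fun_eq_iff add.commute)
    ultimately show ?case by simp
  qed
  have Qm[measurable]: "Q t \<in> M \<rightarrow>\<^sub>M count_space UNIV" for t
  proof (cases "t \<le> 0")
    case True
    then have "Q t = (\<lambda>_. QAB)" using Q_init by auto
    then show ?thesis by simp
  next
    case False
    then have "t = int (nat t)" by simp
    then show ?thesis using Qnat by metis
  qed
  define good where "good \<omega> \<longleftrightarrow> (\<forall>s\<ge>1. \<forall>x0 xt q q'. scheme_kernel \<alpha> \<beta> s x0 xt q q' = 0 \<longrightarrow> F s x0 xt q (S s \<omega>) \<noteq> q')" for \<omega>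
  have AEone: "AE \<omega> in M. F s x0 xt q (S s \<omega>) \<noteq> q'"
    if "s \<ge> 1" "scheme_kernel \<alpha> \<beta> s x0 xt q q' = 0" for s x0 xt q q'
  proof -
    have "emeasure M {\<omega>\<in>space M. F s x0 xt q (S s \<omega>) = q'} = 0"
      using F_law[OF that(1)] that(2) by (simp add: emeasure_eq_measure)
    then show ?thesis using setF by (intro AE_I'[of "{\<omega>\<in>space M. F s x0 xt q (S s \<omega>) = q'}"]) auto
  qed
  have AEgood: "AE \<omega> in M. good \<omega>"
    unfolding good_def
    apply (subst AE_all_countable)
    apply (intro allI AE_impI)
    apply (subst AE_all_countable, intro allI)+
    apply (intro AE_impI)
    using AEone by auto
  have char: "Q (int n) \<omega> = QAB \<longleftrightarrow> (\<forall>s\<in>{1..int n}. X s \<omega> = gp \<alpha> \<beta> (X 0 \<omega>) s \<and> F s (X 0 \<omega>) (gp \<alpha> \<beta> (X 0 \<omega>) s) QAB (S s \<omega>) = QAB)"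
    if g: "good \<omega>" for \<omega> n
  proof (induction n)
    case 0 show ?case using Q_init by auto
  next
    case (Suc n)
    have Qs: "Q (int (Suc n)) \<omega> = F (int n + 1) (X 0 \<omega>) (X (int n+1) \<omega>) (Q (int n) \<omega>) (S (int n + 1) \<omega>)"
      using Q_step[of "int n + 1"] by (simp add: add.commute)
    have iv: "{1..int (Suc n)} = insert (int n + 1) {1..int n}" by auto
    show ?case
    proof
      assume h: "Q (int (Suc n)) \<omega> = QAB"
      have q: "Q (int n) \<omega> = QAB"
      proof (rule ccontr)
        assume "Q (int n) \<omega> \<noteq> QAB"
        then have "scheme_kernel \<alpha> \<beta> (int n+1) (X 0 \<omega>) (X (int n+1) \<omega>) (Q (int n) \<omega>) QAB = 0" by (rule K1)
        with g have "F (int n + 1) (X 0 \<omega>) (X (int n+1) \<omega>) (Q (int n) \<omega>) (S (int n + 1) \<omega>) \<noteq> QAB"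
          unfolding good_def by auto
        with h Qs show False by simp
      qed
      then have Fab: "F (int n+1) (X 0 \<omega>) (X (int n+1) \<omega>) QAB (S (int n+1) \<omega>) = QAB" using h Qs by simp
      then have "scheme_kernel \<alpha> \<beta> (int n+1) (X 0 \<omega>) (X (int n+1) \<omega>) QAB QAB \<noteq> 0"
        using g unfolding good_def by force
      then have xe: "X (int n+1) \<omega> = gp \<alpha> \<beta> (X 0 \<omega>) (int n + 1)" by (rule K2)
      show "\<forall>s\<in>{1..int (Suc n)}. X s \<omega> = gp \<alpha> \<beta> (X 0 \<omega>) s \<and> F s (X 0 \<omega>) (gp \<alpha> \<beta> (X 0 \<omega>) s) QAB (S s \<omega>) = QAB"
        using Suc.IH q Fab xe unfolding iv by auto
    next
      assume h: "\<forall>s\<in>{1..int (Suc n)}. X s \<omega> = gp \<alpha> \<beta> (X 0 \<omega>) s \<and> F s (X 0 \<omega>) (gp \<alpha> \<beta> (X 0 \<omega>) s) QAB (S s \<omega>) = QAB"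
      then have "Q (int n) \<omega> = QAB" using Suc.IH unfolding iv by auto
      moreover have "X (int n+1) \<omega> = gp \<alpha> \<beta> (X 0 \<omega>) (int n + 1)"
        "F (int n+1) (X 0 \<omega>) (gp \<alpha> \<beta> (X 0 \<omega>) (int n + 1)) QAB (S (int n+1) \<omega>) = QAB"
        using h unfolding iv by auto
      ultimately show "Q (int (Suc n)) \<omega> = QAB" using Qs by simp
    qed
  qed
  have path: "measure M {\<omega>\<in>space M. \<forall>i\<in>{0..int m}. X i \<omega> = h i}
      = measure M {\<omega>\<in>space M. X 0 \<omega> = h 0} * (\<Prod>s\<in>{1..int m}. trans_prob \<alpha> \<beta> (h (s-1)) (h s))" for m h
  proof (induction m)
    case 0 then show ?case by simp
  next
    case (Suc m)
    have e: "{\<omega>\<in>space M. \<forall>i\<in>{0..int (Suc m)}. X i \<omega> = h i}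
        = {\<omega>\<in>space M. X (int m + 1) \<omega> = h (int m + 1) \<and> (\<forall>i\<in>{int m - int m..int m}. X i \<omega> = h i)}"
    proof -
      have "{0..int (Suc m)} = insert (int m + 1) {0..int m}" by auto
      then show ?thesis by auto
    qed
    have iv: "{1..int (Suc m)} = insert (int m + 1) {1..int m}" by auto
    show ?case unfolding e markov iv using Suc by (simp add: mult_ac)
  qed
  define E where "E = (\<lambda>i. case i of
           Inl None \<Rightarrow> sigma_sets (space M) {X t -` {x} \<inter> space M | t x. True}
         | Inl (Some t) \<Rightarrow> {S t -` E \<inter> space M | E. E \<in> sets N}
         | Inr (x, t) \<Rightarrow> {W x t -` E \<inter> space M | E. True})"
  have ind: "indep_sets E UNIV" using indep unfolding model_indep_def E_def by simp
  define H where "H n x0 = {\<omega>\<in>space M. X 0 \<omega> = x0 \<and> (\<forall>s\<in>{1..int n}. X s \<omega> = gp \<alpha> \<beta> x0 s)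
       \<and> (\<forall>s\<in>{1..int n}. F s x0 (gp \<alpha> \<beta> x0 s) QAB (S s \<omega>) = QAB)}" for n x0
  have Hm: "H n x0 \<in> sets M" for n x0 unfolding H_def by measurable
  have PH: "measure M (H n x0) = measure M {\<omega>\<in>space M. X 0 \<omega> = x0} * r ^ n" for n x0
  proof -
    define Pa where "Pa = {\<omega>\<in>space M. \<forall>i\<in>{0..int n}. X i \<omega> = gp \<alpha> \<beta> x0 i}"
    define B where "B s = S s -` {z\<in>space N. F s x0 (gp \<alpha> \<beta> x0 s) QAB z = QAB} \<inter> space M" for s
    define A where "A (j::int option + src \<times> int) = (case j of Inl None \<Rightarrow> Pa | Inl (Some s) \<Rightarrow> B s | Inr _ \<Rightarrow> {})" for j
    define J where "J = insert (Inl None :: int option + src \<times> int) ((\<lambda>s. Inl (Some s)) ` {1..int n})"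
    have g0: "gp \<alpha> \<beta> x0 0 = x0" by (simp add: gp_def)
    have gen: "{X t -` {x} \<inter> space M | t x. True} \<subseteq> Pow (space M)" by auto
    have "Pa = (\<Inter>i\<in>{0..int n}. X i -` {gp \<alpha> \<beta> x0 i} \<inter> space M)"
      unfolding Pa_def by auto
    moreover have "(\<Inter>i\<in>{0..int n}. X i -` {gp \<alpha> \<beta> x0 i} \<inter> space M) \<in> sigma_sets (space M) {X t -` {x} \<inter> space M | t x. True}"
    proof -
      interpret sa: sigma_algebra "space M" "sigma_sets (space M) {X t -` {x} \<inter> space M | t x. True}"
        by (rule sigma_algebra_sigma_sets[OF gen])
      show ?thesis
      proof (rule sa.finite_INT)
        fix i show "X i -` {gp \<alpha> \<beta> x0 i} \<inter> space M \<in> sigma_sets (space M) {X t -` {x} \<inter> space M | t x. True}"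
          by (rule sigma_sets.Basic) blast
      qed auto
    qed
    ultimately have PaE: "Pa \<in> E (Inl None)" unfolding E_def by simp
    have BE: "B s \<in> E (Inl (Some s))" for s
    proof -
      have "{z\<in>space N. F s x0 (gp \<alpha> \<beta> x0 s) QAB z = QAB} \<in> sets N" by measurable
      then show ?thesis by (simp only: E_def B_def sum.case option.case mem_Collect_eq) blast
    qed
    have "prob (\<Inter>j\<in>J. A j) = (\<Prod>j\<in>J. prob (A j))"
    proof (rule indep_setsD[OF ind])
      show "\<forall>j\<in>J. A j \<in> E j" unfolding J_def A_def using PaE BE by simp
    qed (auto simp: J_def)
    moreover have "(\<Inter>j\<in>J. A j) = H n x0"
    proof -
      have "(\<Inter>j\<in>J. A j) = Pa \<inter> (\<Inter>s\<in>{1..int n}. B s)" unfolding J_def A_def by auto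
      also have "\<dots> = H n x0"
      proof -
        have i0: "{0..int n} = insert 0 {1..int n}" by auto
        show ?thesis unfolding Pa_def B_def H_def i0 using g0 measurable_space[OF S_meas] by auto
      qed
      finally show ?thesis .
    qed
    moreover have "(\<Prod>j\<in>J. prob (A j)) = prob Pa * (\<Prod>s\<in>{1..int n}. prob (B s))"
      unfolding J_def by (subst prod.insert) (auto simp: prod.reindex inj_on_def A_def)
    moreover have "prob (B s) = scheme_kernel \<alpha> \<beta> s x0 (gp \<alpha> \<beta> x0 s) QAB QAB" if "s \<in> {1..int n}" for s
    proof -
      have "B s = {\<omega>\<in>space M. F s x0 (gp \<alpha> \<beta> x0 s) QAB (S s \<omega>) = QAB}"
        unfolding B_def using measurable_space[OF S_meas] by auto
      then show ?thesis using F_law[of s] that by simp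
    qed
    moreover have "prob Pa = measure M {\<omega>\<in>space M. X 0 \<omega> = x0} * (\<Prod>s\<in>{1..int n}. trans_prob \<alpha> \<beta> (gp \<alpha> \<beta> x0 (s-1)) (gp \<alpha> \<beta> x0 s))"
      unfolding Pa_def using path[of n "gp \<alpha> \<beta> x0"] g0 by simp
    ultimately have "measure M (H n x0) = measure M {\<omega>\<in>space M. X 0 \<omega> = x0} *
       ((\<Prod>s\<in>{1..int n}. trans_prob \<alpha> \<beta> (gp \<alpha> \<beta> x0 (s-1)) (gp \<alpha> \<beta> x0 s)) * (\<Prod>s\<in>{1..int n}. scheme_kernel \<alpha> \<beta> s x0 (gp \<alpha> \<beta> x0 s) QAB QAB))"
      by (simp add: mult_ac)
    also have "\<dots> = measure M {\<omega>\<in>space M. X 0 \<omega> = x0} * (\<Prod>s\<in>{1..int n}. r)"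
      unfolding prod.distrib[symmetric] r_def using K4[OF ab] by simp
    finally show ?thesis by simp
  qed
  have X0sum: "measure M {\<omega>\<in>space M. X 0 \<omega> = SrcA} + measure M {\<omega>\<in>space M. X 0 \<omega> = SrcB} = 1"
  proof -
    have "{\<omega>\<in>space M. X 0 \<omega> = SrcB} = space M - {\<omega>\<in>space M. X 0 \<omega> = SrcA}"
      by auto (metis src.exhaust)
    moreover have "{\<omega>\<in>space M. X 0 \<omega> = SrcA} \<in> sets M" by measurable
    ultimately show ?thesis using finite_measure_compl prob_space by simp
  qed
  have main: "measure M {\<omega>\<in>space M. Q (int n) \<omega> = QAB} = r ^ n" for n
  proof -
    have "measure M {\<omega>\<in>space M. Q (int n) \<omega> = QAB} = measure M (H n SrcA \<union> H n SrcB)"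
    proof (rule measure_eq_AE)
      show "AE \<omega> in M. (\<omega> \<in> {\<omega> \<in> space M. Q (int n) \<omega> = QAB}) = (\<omega> \<in> H n SrcA \<union> H n SrcB)"
        using AEgood
      proof eventually_elim
        case (elim \<omega>)
        show ?case unfolding H_def using char[OF elim, of n] by (cases "X 0 \<omega>") auto
      qed
    qed (use Hm in measurable)
    also have "\<dots> = measure M (H n SrcA) + measure M (H n SrcB)"
      by (rule finite_measure_Union[OF Hm Hm]) (auto simp: H_def)
    also have "\<dots> = r ^ n" unfolding PH using X0sum by (simp add: distrib_right[symmetric])
    finally show ?thesis .
  qed
  define dec :: "src \<Rightarrow> qry \<Rightarrow> answer \<Rightarrow> bool list" where
    "dec xt q ans = (case ans of Single w \<Rightarrow> w | Both wa wb \<Rightarrow> (case xt of SrcA \<Rightarrow> wa | SrcB \<Rightarrow> wb))" for xt q ans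
  have Qsupp: "Q t \<omega> = src_query (X t \<omega>) \<or> Q t \<omega> = QAB" if g: "good \<omega>" for t \<omega>
  proof (cases "t \<le> 0")
    case True then show ?thesis using Q_init by simp
  next
    case False
    then have t1: "t \<ge> 1" by simp
    have "scheme_kernel \<alpha> \<beta> t (X 0 \<omega>) (X t \<omega>) (Q (t-1) \<omega>) (Q t \<omega>) \<noteq> 0"
      using g t1 Q_step[OF t1, of \<omega>] unfolding good_def by metis
    then show ?thesis by (rule K3)
  qed
  have decAE: "\<forall>t. AE \<omega> in M. dec (X t \<omega>) (Q t \<omega>) (answer_of (Q t \<omega>) (W SrcA t \<omega>) (W SrcB t \<omega>)) = W (X t \<omega>) t \<omega>"
  proof
    fix t
    show "AE \<omega> in M. dec (X t \<omega>) (Q t \<omega>) (answer_of (Q t \<omega>) (W SrcA t \<omega>) (W SrcB t \<omega>)) = W (X t \<omega>) t \<omega>"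
      using AEgood
    proof eventually_elim
      case (elim \<omega>)
      show ?case using Qsupp[OF elim, of t]
        by (cases "X t \<omega>") (auto simp: dec_def answer_of_def src_query_def)
    qed
  qed
  have Qset: "{\<omega>\<in>space M. Q t \<omega> = QAB} \<in> sets M" for t by measurable
  have costeq: "(\<integral>\<omega>. cost L (Q t \<omega>) \<partial>M) = real L + real L * measure M {\<omega>\<in>space M. Q t \<omega> = QAB}" for t
  proof -
    have "(\<integral>\<omega>. cost L (Q t \<omega>) \<partial>M) = (\<integral>\<omega>. real L + real L * indicator {\<omega>\<in>space M. Q t \<omega> = QAB} \<omega> \<partial>M)"
      by (rule Bochner_Integration.integral_cong) (auto simp: cost_def indicator_def split: qry.split)
    also have "\<dots> = real L + real L * measure M {\<omega>\<in>space M. Q t \<omega> = QAB}"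
      using Qset[of t] prob_space
      by (subst Bochner_Integration.integral_add) (auto intro!: integrable_real_indicator simp: Int_absorb2 sets.sets_into_space emeasure_eq_measure)
    finally show ?thesis .
  qed
  have c1: "\<forall>t\<ge>1. measure M {\<omega> \<in> space M. Q t \<omega> = QAB} = \<bar>1 - \<alpha> - \<beta>\<bar> ^ nat t"
  proof (intro allI impI)
    fix t :: int assume "t \<ge> 1"
    then have "t = int (nat t)" by simp
    then show "measure M {\<omega> \<in> space M. Q t \<omega> = QAB} = \<bar>1 - \<alpha> - \<beta>\<bar> ^ nat t"
      using main[of "nat t"] r_def by metis
  qed
  have Lpos: "real L > 0" using L by simp
  show ?thesis
  proof (intro conjI)
    show "\<forall>t\<ge>1. measure M {\<omega> \<in> space M. Q t \<omega> = QAB} = \<bar>1 - \<alpha> - \<beta>\<bar> ^ nat t" by (rule c1)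
    show "\<exists>dec :: src \<Rightarrow> qry \<Rightarrow> answer \<Rightarrow> bool list. \<forall>t.
            AE \<omega> in M. dec (X t \<omega>) (Q t \<omega>) (answer_of (Q t \<omega>) (W SrcA t \<omega>) (W SrcB t \<omega>))
                        = W (X t \<omega>) t \<omega>" using decAE by blast
    show "\<forall>t \<ge> 1. (\<integral>\<omega>. cost L (Q t \<omega>) \<partial>M) / real L = 1 + \<bar>1 - \<alpha> - \<beta>\<bar> ^ nat t"
      using c1 costeq Lpos by (simp add: field_simps)
    show "\<forall>t \<le> 0. (\<integral>\<omega>. cost L (Q t \<omega>) \<partial>M) / real L = 2"
    proof (intro allI impI)
      fix t :: int assume "t \<le> 0"
      then have "{\<omega> \<in> space M. Q t \<omega> = QAB} = space M" using Q_init by auto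
      then show "(\<integral>\<omega>. cost L (Q t \<omega>) \<partial>M) / real L = 2" using costeq[of t] Lpos prob_space by simp
    qed
  qed
qed

end
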